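(* Let $(\mathbb S,+,\cdot)$ be an S-Ring. Then $(\mathbb S,\cdot)$ is not associative.
   Context: An S-Structure is a triple $(\mathbb S,+,\cdot)$ where $\mathbb S$ is a set and $+,\cdot$ are binary operations on $\mathbb S$ such that: $(\mathbb S,+)$ is a commutative group with identity $0$ (the inverse of $s$ is written $-s$, and $s-t:=s+(-t)$); $\mathbb S$ is closed under $\cdot$; and there exists $s\in\mathbb S$ with $0\cdot s\neq 0$ or $s\cdot 0\neq 0$. Multiplication binds tighter than addition. The structures considered come with a distinguished element of $\mathbb S$ denoted $1$. It is Commutative if $s\cdot t=t\cdot s$ for all $s,t$. For a Commutative S-Structure and $\alpha\in\mathbb S$, put $\mathbb S_\alpha=\{s\in\mathbb S:0\cdot s=s\cdot 0=\alpha\}$ and $\Lambda=\{\alpha\in\mathbb S:\mathbb S_\alpha\neq\emptyset\}$. Wheel Distributive: $s\cdot(t+r)+(s\cdot 0)=(s\cdot t)+(s\cdot r)$ for all $s,t,r\in\mathbb S$. S-Associative: for all $m,n\in\mathbb S_0$ and $s\in\mathbb S$, $m\cdot(n\cdot s)=(m\cdot n)\cdot s-([(m-1)\cdot(n-1)]\cdot(0\cdot s))$. Base: if $\mathbb S_0\neq\emptyset$ and $\alpha\in\Lambda$, $q\in\mathbb S_\alpha$ is a Base for $\mathbb S_\alpha$ if $q+\beta\in\mathbb S_\alpha$ for all $\beta\in\mathbb S_0$ and every $s\in\mathbb S_\alpha$ equals $q+\beta$ for some $\beta\in\mathbb S_0$. Coordinated: $\mathbb S_0\neq\emptyset$ and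 every $\mathbb S_\alpha$ with $\alpha\in\Lambda$ has a Base. Standard Bases: a Coordinated Commutative S-Structure has Standard Bases if there is a specified element $q_0(1)\in\mathbb S_1$ which is a Base for $\mathbb S_1$, and for every $\alpha\in\Lambda$ the element $q_0(\alpha):=\alpha\cdot(q_0(1)+1)-1$ lies in $\mathbb S_\alpha$ and is a Base for $\mathbb S_\alpha$. An Essential S-Structure is an S-Structure that is Commutative, Wheel Distributive, S-Associative, has Standard Bases (in particular is Coordinated), satisfies $0,1\in\mathbb S_0$, and satisfies $\mathbb S_0=\{1\cdot x:x\in\mathbb S_0\}$. A Unity is an element $e\in\Lambda$ with $e\cdot s=s\cdot e=s$ for all $s\in\mathbb S$. An S-Ring is an Essential S-Structure which has a Unity. *)

theory Defs
  imports Main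
begin

definition s_structure ::
  "'a set \<Rightarrow> ('a \<Rightarrow> 'a \<Rightarrow> 'a) \<Rightarrow> ('a \<Rightarrow> 'a \<Rightarrow> 'a) \<Rightarrow> 'a \<Rightarrow> ('a \<Rightarrow> 'a) \<Rightarrow> 'a \<Rightarrow> bool" where
  "s_structure S add mul zero neg one \<longleftrightarrow>
     (\<forall>x\<in>S. \<forall>y\<in>S. add x y \<in> S) \<and>
     (\<forall>x\<in>S. \<forall>y\<in>S. \<forall>z\<in>S. add (add x y) z = add x (add y z)) \<and>
     (\<forall>x\<in>S. \<forall>y\<in>S. add x y = add y x) \<and>
     zero \<in> S \<and> (\<forall>x\<in>S. add zero x = x) \<and>
     (\<forall>x\<in>S. neg x \<in> S \<and> add x (neg x) = zero) \<and>
     (\<forall>x\<in>S. \<forall>y\<in>S. mul x y \<in> S) \<and>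
     (\<exists>s\<in>S. mul zero s \<noteq> zero \<or> mul s zero \<noteq> zero) \<and>
     one \<in> S"

definition s_sub :: "('a \<Rightarrow> 'a \<Rightarrow> 'a) \<Rightarrow> ('a \<Rightarrow> 'a) \<Rightarrow> 'a \<Rightarrow> 'a \<Rightarrow> 'a" where
  "s_sub add neg x y = add x (neg y)"

definition s_commutative :: "'a set \<Rightarrow> ('a \<Rightarrow> 'a \<Rightarrow> 'a) \<Rightarrow> bool" where
  "s_commutative S mul \<longleftrightarrow> (\<forall>s\<in>S. \<forall>t\<in>S. mul s t = mul t s)"

definition S_alpha :: "'a set \<Rightarrow> ('a \<Rightarrow> 'a \<Rightarrow> 'a) \<Rightarrow> 'a \<Rightarrow> 'a \<Rightarrow> 'a set" where
  "S_alpha S mul zero \<alpha> = {s \<in> S. mul zero s = \<alpha> \<and> mul s zero = \<alpha>}"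

definition Lambda_set :: "'a set \<Rightarrow> ('a \<Rightarrow> 'a \<Rightarrow> 'a) \<Rightarrow> 'a \<Rightarrow> 'a set" where
  "Lambda_set S mul zero = {\<alpha> \<in> S. S_alpha S mul zero \<alpha> \<noteq> {}}"

definition wheel_distributive ::
  "'a set \<Rightarrow> ('a \<Rightarrow> 'a \<Rightarrow> 'a) \<Rightarrow> ('a \<Rightarrow> 'a \<Rightarrow> 'a) \<Rightarrow> 'a \<Rightarrow> bool" where
  "wheel_distributive S add mul zero \<longleftrightarrow>
     (\<forall>s\<in>S. \<forall>t\<in>S. \<forall>r\<in>S. add (mul s (add t r)) (mul s zero) = add (mul s t) (mul s r))"

definition s_associative ::
  "'a set \<Rightarrow> ('a \<Rightarrow> 'a \<Rightarrow> 'a) \<Rightarrow> ('a \<Rightarrow> 'a \<Rightarrow> 'a) \<Rightarrow> 'a \<Rightarrow> ('a \<Rightarrow> 'a) \<Rightarrow> 'a \<Rightarrow> bool" where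
  "s_associative S add mul zero neg one \<longleftrightarrow>
     (\<forall>m\<in>S_alpha S mul zero zero. \<forall>n\<in>S_alpha S mul zero zero. \<forall>s\<in>S.
        mul m (mul n s) =
        s_sub add neg (mul (mul m n) s)
          (mul (mul (s_sub add neg m one) (s_sub add neg n one)) (mul zero s)))"

definition is_base ::
  "'a set \<Rightarrow> ('a \<Rightarrow> 'a \<Rightarrow> 'a) \<Rightarrow> ('a \<Rightarrow> 'a \<Rightarrow> 'a) \<Rightarrow> 'a \<Rightarrow> 'a \<Rightarrow> 'a \<Rightarrow> bool" where
  "is_base S add mul zero \<alpha> q \<longleftrightarrow>
     q \<in> S_alpha S mul zero \<alpha> \<and>
     (\<forall>\<beta>\<in>S_alpha S mul zero zero. add q \<beta> \<in> S_alpha S mul zero \<alpha>) \<and>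
     (\<forall>s\<in>S_alpha S mul zero \<alpha>. \<exists>\<beta>\<in>S_alpha S mul zero zero. s = add q \<beta>)"

definition coordinated ::
  "'a set \<Rightarrow> ('a \<Rightarrow> 'a \<Rightarrow> 'a) \<Rightarrow> ('a \<Rightarrow> 'a \<Rightarrow> 'a) \<Rightarrow> 'a \<Rightarrow> bool" where
  "coordinated S add mul zero \<longleftrightarrow>
     S_alpha S mul zero zero \<noteq> {} \<and>
     (\<forall>\<alpha>\<in>Lambda_set S mul zero. \<exists>q. is_base S add mul zero \<alpha> q)"

definition standard_bases ::
  "'a set \<Rightarrow> ('a \<Rightarrow> 'a \<Rightarrow> 'a) \<Rightarrow> ('a \<Rightarrow> 'a \<Rightarrow> 'a) \<Rightarrow> 'a \<Rightarrow> ('a \<Rightarrow> 'a) \<Rightarrow> 'a \<Rightarrow> 'a \<Rightarrow> bool" where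
  "standard_bases S add mul zero neg one q01 \<longleftrightarrow>
     coordinated S add mul zero \<and>
     q01 \<in> S_alpha S mul zero one \<and> is_base S add mul zero one q01 \<and>
     (\<forall>\<alpha>\<in>Lambda_set S mul zero.
        s_sub add neg (mul \<alpha> (add q01 one)) one \<in> S_alpha S mul zero \<alpha> \<and>
        is_base S add mul zero \<alpha> (s_sub add neg (mul \<alpha> (add q01 one)) one))"

definition essential_s_structure ::
  "'a set \<Rightarrow> ('a \<Rightarrow> 'a \<Rightarrow> 'a) \<Rightarrow> ('a \<Rightarrow> 'a \<Rightarrow> 'a) \<Rightarrow> 'a \<Rightarrow> ('a \<Rightarrow> 'a) \<Rightarrow> 'a \<Rightarrow> bool" where
  "essential_s_structure S add mul zero neg one \<longleftrightarrow>
     s_structure S add mul zero neg one \<and>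
     s_commutative S mul \<and>
     wheel_distributive S add mul zero \<and>
     s_associative S add mul zero neg one \<and>
     (\<exists>q01. standard_bases S add mul zero neg one q01) \<and>
     zero \<in> S_alpha S mul zero zero \<and> one \<in> S_alpha S mul zero zero \<and>
     S_alpha S mul zero zero = {mul one x | x. x \<in> S_alpha S mul zero zero}"

definition is_unity :: "'a set \<Rightarrow> ('a \<Rightarrow> 'a \<Rightarrow> 'a) \<Rightarrow> 'a \<Rightarrow> 'a \<Rightarrow> bool" where
  "is_unity S mul zero e \<longleftrightarrow>
     e \<in> Lambda_set S mul zero \<and> (\<forall>s\<in>S. mul e s = s \<and> mul s e = s)"

definition s_ring ::
  "'a set \<Rightarrow> ('a \<Rightarrow> 'a \<Rightarrow> 'a) \<Rightarrow> ('a \<Rightarrow> 'a \<Rightarrow> 'a) \<Rightarrow> 'a \<Rightarrow> ('a \<Rightarrow> 'a) \<Rightarrow> 'a \<Rightarrow> bool" where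
  "s_ring S add mul zero neg one \<longleftrightarrow>
     essential_s_structure S add mul zero neg one \<and> (\<exists>e. is_unity S mul zero e)"

end

theory Submission
  imports Defs
begin

lemma grp_cancel:
  assumes "s_structure S add mul zero neg one" "x \<in> S" "y \<in> S" "add x (neg y) = x"
  shows "y = zero"
proof -
  have A: "\<forall>x\<in>S. \<forall>y\<in>S. \<forall>z\<in>S. add (add x y) z = add x (add y z)"
   and C: "\<forall>x\<in>S. \<forall>y\<in>S. add x y = add y x"
   and Z: "zero \<in> S" "\<forall>x\<in>S. add zero x = x"
   and N: "\<forall>x\<in>S. neg x \<in> S \<and> add x (neg x) = zero"
    using assms(1) unfolding s_structure_def by auto
  have ny: "neg y \<in> S" using N assms by auto
  have "add (add x (neg y)) y = add x y" using assms(4) by simp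
  moreover have "add (add x (neg y)) y = add x (add (neg y) y)" using A assms(2,3) ny by auto
  moreover have "add (neg y) y = zero" using C N ny assms by metis
  moreover have "add x zero = x" using C Z assms by metis
  ultimately have xy: "x = add x y" by simp
  have nx: "neg x \<in> S" using N assms by auto
  have "add (neg x) x = add (neg x) (add x y)" using xy by simp
  also have "\<dots> = add (add (neg x) x) y" using A nx assms by auto
  finally have "zero = add zero y" using C N nx assms by metis
  thus ?thesis using Z assms by auto
qed

theorem corollary3p2p2:
  fixes S :: "'a set" and add mul :: "'a \<Rightarrow> 'a \<Rightarrow> 'a" and zero one :: 'a and neg :: "'a \<Rightarrow> 'a"
  assumes "s_ring S add mul zero neg one"
  shows "\<not> (\<forall>x\<in>S. \<forall>y\<in>S. \<forall>z\<in>S. mul (mul x y) z = mul x (mul y z))"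
proof
  assume as: "\<forall>x\<in>S. \<forall>y\<in>S. \<forall>z\<in>S. mul (mul x y) z = mul x (mul y z)"
  have st: "s_structure S add mul zero neg one" and com: "s_commutative S mul"
    and sa: "s_associative S add mul zero neg one"
    and z0: "zero \<in> S_alpha S mul zero zero" and o0: "one \<in> S_alpha S mul zero zero"
    using assms unfolding s_ring_def essential_s_structure_def by auto
  have ZS: "zero \<in> S" "one \<in> S" and MS: "\<forall>x\<in>S. \<forall>y\<in>S. mul x y \<in> S"
    and N: "\<forall>x\<in>S. neg x \<in> S \<and> add x (neg x) = zero"
    and ex: "\<exists>s\<in>S. mul zero s \<noteq> zero \<or> mul s zero \<noteq> zero"
    using st unfolding s_structure_def by auto
  have zz: "mul zero zero = zero" using z0 unfolding S_alpha_def by auto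
  have oo: "s_sub add neg one one = zero" using N ZS unfolding s_sub_def by auto
  have key: "mul zero s = zero" if s: "s \<in> S" for s
  proof -
    have e: "mul one (mul one s) = s_sub add neg (mul (mul one one) s) (mul (mul zero zero) (mul zero s))"
      using sa o0 s oo unfolding s_associative_def by (metis (no_types, lifting))
    have "mul one (mul one s) = mul (mul one one) s" using as ZS s by auto
    hence "add (mul (mul one one) s) (neg (mul (mul zero zero) (mul zero s))) = mul (mul one one) s"
      using e unfolding s_sub_def by simp
    hence "mul (mul zero zero) (mul zero s) = zero"
      by (rule grp_cancel[OF st, rotated 2]) (use MS ZS s in auto)
    moreover have "mul (mul zero zero) (mul zero s) = mul (mul zero zero) s"
      using as ZS s zz by metis
    ultimately show ?thesis using zz by simp
  qed
  then show False using ex com ZS unfolding s_commutative_def by metis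
qed

end
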